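(* Let $\Pi_q$ be a projective plane (not necessarily Desarguesian) of order $q\ge 2$. Let $c\ge 1$ be a real number and let $k$ be an integer such that \[ 2c\sqrt{(q+1)\ln (q+1)}+2\le k<\frac{q^{2}-1}{q+2}. \] Then a point set of size $k$ chosen uniformly at random among all $k$-subsets of the point set of $\Pi_q$ is a saturating set with probability greater than \[ 1-\frac{1}{(q+1)^{2c^{2}-2}}. \]
   Context: A point set $S\subset \Pi_q$ is saturating if every point of $\Pi_q\setminus S$ is collinear with two points of $S$. Here $\ln$ denotes the natural logarithm. *)

theory Defs
  imports Complex_Main
begin

definition collinear3 :: "'a set set \<Rightarrow> 'a \<Rightarrow> 'a \<Rightarrow> 'a \<Rightarrow> bool" where
  "collinear3 L x y z \<longleftrightarrow> (\<exists>l\<in>L. x \<in> l \<and> y \<in> l \<and> z \<in> l)"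

definition projective_plane_of_order :: "'a set \<Rightarrow> 'a set set \<Rightarrow> nat \<Rightarrow> bool" where
  "projective_plane_of_order P L q \<longleftrightarrow>
     finite P \<and>
     (\<forall>l\<in>L. l \<subseteq> P \<and> card l = q + 1) \<and>
     (\<forall>x\<in>P. \<forall>y\<in>P. x \<noteq> y \<longrightarrow> (\<exists>!l. l \<in> L \<and> x \<in> l \<and> y \<in> l)) \<and>
     (\<forall>l\<in>L. \<forall>m\<in>L. l \<noteq> m \<longrightarrow> (\<exists>!x. x \<in> l \<and> x \<in> m)) \<and>
     (\<exists>a b c d. {a, b, c, d} \<subseteq> P \<and> card {a, b, c, d} = 4 \<and>
        \<not> collinear3 L a b c \<and> \<not> collinear3 L a b d \<and>
        \<not> collinear3 L a c d \<and> \<not> collinear3 L b c d)"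

definition saturating :: "'a set \<Rightarrow> 'a set set \<Rightarrow> 'a set \<Rightarrow> bool" where
  "saturating P L S \<longleftrightarrow>
     (\<forall>x\<in>P - S. \<exists>a\<in>S. \<exists>b\<in>S. a \<noteq> b \<and> collinear3 L x a b)"

end

theory Submission
  imports Defs
begin


lemma pp_parts1: assumes pp: "projective_plane_of_order P L q" shows "finite P"
  using pp unfolding projective_plane_of_order_def by (elim conjE) assumption
lemma pp_parts2: assumes pp: "projective_plane_of_order P L q" shows "\<forall>l\<in>L. l \<subseteq> P \<and> card l = q + 1"
  using pp unfolding projective_plane_of_order_def by (elim conjE) assumption
lemma pp_parts3: assumes pp: "projective_plane_of_order P L q" shows
    "\<forall>x\<in>P. \<forall>y\<in>P. x \<noteq> y \<longrightarrow> (\<exists>!l. l \<in> L \<and> x \<in> l \<and> y \<in> l)"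
  using pp unfolding projective_plane_of_order_def by (elim conjE) assumption
lemma pp_parts4: assumes pp: "projective_plane_of_order P L q" shows
    "\<forall>l\<in>L. \<forall>m\<in>L. l \<noteq> m \<longrightarrow> (\<exists>!x. x \<in> l \<and> x \<in> m)"
  using pp unfolding projective_plane_of_order_def by (elim conjE) assumption

lemma pp_line:
  assumes pp: "projective_plane_of_order P L q" and "x \<in> P" "y \<in> P" "x \<noteq> y"
  shows "\<exists>!l. l \<in> L \<and> x \<in> l \<and> y \<in> l"
  using pp_parts3[OF pp] assms(2-4) by blast

lemma pp_meet:
  assumes pp: "projective_plane_of_order P L q" and "l \<in> L" "m \<in> L" "l \<noteq> m"
  shows "\<exists>!x. x \<in> l \<and> x \<in> m"
  using pp_parts4[OF pp] assms(2-4) by blast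

lemma pp_sub: assumes pp: "projective_plane_of_order P L q" and "l \<in> L"
  shows "l \<subseteq> P" "card l = q + 1"
  using pp_parts2[OF pp] assms(2) by blast+

lemma pp_fin: assumes pp: "projective_plane_of_order P L q" shows "finite P"
  using pp_parts1[OF pp] .

lemma pp_meet_eq:
  assumes pp: "projective_plane_of_order P L q" and "l \<in> L" "m \<in> L" "l \<noteq> m"
   and "x \<in> l" "x \<in> m" "y \<in> l" "y \<in> m" shows "x = y"
  using pp_meet[OF pp assms(2-4)] assms(5-) by blast

lemma pp_line_eq:
  assumes pp: "projective_plane_of_order P L q" and "x \<in> P" "y \<in> P" "x \<noteq> y"
   and "l \<in> L" "m \<in> L" "x \<in> l" "y \<in> l" "x \<in> m" "y \<in> m" shows "l = m"
  using pp_line[OF pp assms(2-4)] assms(5-) by blast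

lemma pp_avoid:
  assumes pp: "projective_plane_of_order P L q" and x: "x \<in> P"
  shows "\<exists>m\<in>L. x \<notin> m"
proof -
  have ex: "\<exists>a b c d. {a, b, c, d} \<subseteq> P \<and> card {a, b, c, d} = 4 \<and>
        \<not> collinear3 L a b c \<and> \<not> collinear3 L a b d \<and>
        \<not> collinear3 L a c d \<and> \<not> collinear3 L b c d"
    using pp unfolding projective_plane_of_order_def by (elim conjE) assumption
  obtain a b c d where abcd: "{a, b, c, d} \<subseteq> P" "card {a, b, c, d} = 4"
     "\<not> collinear3 L a b c" "\<not> collinear3 L a b d"
     "\<not> collinear3 L a c d" "\<not> collinear3 L b c d"
    using ex by blast
  have dist: "a \<noteq> b" "a \<noteq> c" "c \<noteq> d"
    using abcd(2) by (auto simp: card_insert_if split: if_splits)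
  obtain lab where lab: "lab \<in> L" "a \<in> lab" "b \<in> lab" using pp_line[OF pp _ _ dist(1)] abcd(1) by auto
  obtain lac where lac: "lac \<in> L" "a \<in> lac" "c \<in> lac" using pp_line[OF pp _ _ dist(2)] abcd(1) by auto
  obtain lcd where lcd: "lcd \<in> L" "c \<in> lcd" "d \<in> lcd" using pp_line[OF pp _ _ dist(3)] abcd(1) by auto
  show ?thesis
  proof (rule ccontr)
    assume "\<not> ?thesis"
    hence all: "\<forall>m\<in>L. x \<in> m" by blast
    have "lab \<noteq> lac" using lab lac abcd(3) unfolding collinear3_def by blast
    hence "x = a" using pp_meet_eq[OF pp lab(1) lac(1)] all lab lac by blast
    thus False using all lcd abcd(5) unfolding collinear3_def by blast
  qed
qed

definition lines_through :: "'a set set \<Rightarrow> 'a \<Rightarrow> 'a set set" where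
  "lines_through L x = {l \<in> L. x \<in> l}"

lemma pp_Lfin: assumes pp: "projective_plane_of_order P L q" shows "finite (lines_through L x)"
proof -
  have "lines_through L x \<subseteq> Pow P" using pp_sub[OF pp] unfolding lines_through_def by blast
  thus ?thesis using pp_fin[OF pp] finite_subset by blast
qed

lemma pp_card_through:
  assumes pp: "projective_plane_of_order P L q" and x: "x \<in> P"
  shows "card (lines_through L x) = q + 1"
proof -
  obtain m where m: "m \<in> L" "x \<notin> m" using pp_avoid[OF pp x] by blast
  define f where "f y = (THE l. l \<in> L \<and> x \<in> l \<and> y \<in> l)" for y
  have f: "f y \<in> L \<and> x \<in> f y \<and> y \<in> f y" if "y \<in> m" for y
  proof -
    have "y \<in> P" "x \<noteq> y" using that m pp_sub[OF pp m(1)] by auto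
    from theI'[OF pp_line[OF pp x this]] show ?thesis unfolding f_def .
  qed
  have "bij_betw f m (lines_through L x)"
  proof (rule bij_betwI')
    fix y z assume yz: "y \<in> m" "z \<in> m"
    show "(f y = f z) = (y = z)"
    proof
      assume "f y = f z"
      moreover have "f y \<noteq> m" using f[OF yz(1)] m by blast
      ultimately show "y = z" using pp_meet_eq[OF pp _ m(1)] f yz by metis
    qed simp
  next
    fix y assume "y \<in> m" thus "f y \<in> lines_through L x" using f unfolding lines_through_def by blast
  next
    fix l assume l: "l \<in> lines_through L x"
    hence l': "l \<in> L" "x \<in> l" unfolding lines_through_def by auto
    have "l \<noteq> m" using l' m by blast
    then obtain y where y: "y \<in> l" "y \<in> m" using pp_meet[OF pp l'(1) m(1)] by blast
    have "y \<in> P" "x \<noteq> y" using y m pp_sub[OF pp m(1)] by auto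
    hence "f y = l" using pp_line_eq[OF pp x _ _ _ l'(1)] f[OF y(2)] l' y by metis
    thus "\<exists>y\<in>m. l = f y" using y by blast
  qed
  thus ?thesis using bij_betw_same_card pp_sub(2)[OF pp m(1)] by metis
qed

lemma pp_cover:
  assumes pp: "projective_plane_of_order P L q" and x: "x \<in> P"
  shows "P - {x} = (\<Union>l\<in>lines_through L x. l - {x})"
proof
  show "P - {x} \<subseteq> (\<Union>l\<in>lines_through L x. l - {x})"
  proof
    fix y assume "y \<in> P - {x}"
    then obtain l where "l \<in> L" "x \<in> l" "y \<in> l" using pp_line[OF pp x, of y] by auto
    thus "y \<in> (\<Union>l\<in>lines_through L x. l - {x})" using \<open>y \<in> P - {x}\<close> unfolding lines_through_def by blast
  qed
  show "(\<Union>l\<in>lines_through L x. l - {x}) \<subseteq> P - {x}"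
    using pp_sub[OF pp] unfolding lines_through_def by blast
qed

lemma pp_cardP:
  assumes pp: "projective_plane_of_order P L q" and x: "x \<in> P"
  shows "card P = q^2 + q + 1"
proof -
  have "card (P - {x}) = (\<Sum>l\<in>lines_through L x. card (l - {x}))"
    unfolding pp_cover[OF pp x]
  proof (rule card_UN_disjoint[OF pp_Lfin[OF pp]])
    show "\<forall>i\<in>lines_through L x. finite (i - {x})"
      using pp_sub[OF pp] pp_fin[OF pp] finite_subset unfolding lines_through_def by blast
    show "\<forall>i\<in>lines_through L x. \<forall>j\<in>lines_through L x. i \<noteq> j \<longrightarrow> (i - {x}) \<inter> (j - {x}) = {}"
      using pp_meet_eq[OF pp] unfolding lines_through_def by blast
  qed
  also have "\<dots> = (\<Sum>l\<in>lines_through L x. q)"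
  proof (rule sum.cong)
    fix l assume "l \<in> lines_through L x"
    thus "card (l - {x}) = q" using pp_sub(2)[OF pp] unfolding lines_through_def by auto
  qed simp
  also have "\<dots> = (q+1) * q" using pp_card_through[OF pp x] by simp
  finally have "card P - 1 = (q+1)*q" using x by simp
  moreover have "card P \<ge> 1" using x pp_fin[OF pp] card_0_eq[of P] by fastforce
  ultimately show ?thesis by (simp add: power2_eq_square algebra_simps)
qed



definition Gs :: "'a set \<Rightarrow> 'a set set \<Rightarrow> 'a \<Rightarrow> nat \<Rightarrow> 'a set set" where
  "Gs P L x m = {S. S \<subseteq> P - {x} \<and> card S = m \<and> (\<forall>l\<in>lines_through L x. card (S \<inter> l) \<le> 1)}"

lemma Gs_fin: assumes pp: "projective_plane_of_order P L q" shows "finite (Gs P L x m)"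
proof -
  have "Gs P L x m \<subseteq> Pow P" unfolding Gs_def by blast
  thus ?thesis using pp_fin[OF pp] finite_subset by blast
qed

lemma Gs0: assumes pp: "projective_plane_of_order P L q" shows "card (Gs P L x 0) = 1"
proof -
  have "Gs P L x 0 = {{}}"
  proof -
    have "S = {}" if "S \<subseteq> P - {x}" "card S = 0" for S
      using finite_subset[OF that(1) finite_Diff[OF pp_fin[OF pp]]] that(2) by simp
    hence "Gs P L x 0 \<subseteq> {{}}" unfolding Gs_def by blast
    moreover have "{} \<in> Gs P L x 0" unfolding Gs_def by simp
    ultimately show ?thesis by blast
  qed
  thus ?thesis by simp
qed

lemma Gs_step:
  assumes pp: "projective_plane_of_order P L q" and x: "x \<in> P"
  shows "(m+1) * card (Gs P L x (m+1)) \<le> card (Gs P L x m) * (q * (q + 1 - m))"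
proof -
  define Lx where "Lx = lines_through L x"
  define C where "C U = (\<Union>l\<in>{l\<in>Lx. l \<inter> U = {}}. l - {x})" for U
  define A where "A = Sigma (Gs P L x (m+1)) (\<lambda>T. T)"
  define h where "h p = (fst p - {snd p}, snd p)" for p :: "'a set \<times> 'a"
  have finP: "finite P" using pp_fin[OF pp] .
  have LxF: "finite Lx" unfolding Lx_def using pp_Lfin[OF pp] .
  have cA: "card A = (m+1) * card (Gs P L x (m+1))"
  proof -
    have "card A = (\<Sum>T\<in>Gs P L x (m+1). card T)" unfolding A_def
    proof (rule card_SigmaI[OF Gs_fin[OF pp]])
      show "\<forall>T\<in>Gs P L x (m+1). finite T" unfolding Gs_def using finP finite_subset by blast
    qed
    also have "\<dots> = (\<Sum>T\<in>Gs P L x (m+1). m+1)" by (rule sum.cong) (auto simp: Gs_def)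
    finally show ?thesis by simp
  qed
  have inj: "inj_on h A" unfolding inj_on_def A_def h_def by auto
  have sub: "h ` A \<subseteq> Sigma (Gs P L x m) C"
  proof
    fix p assume "p \<in> h ` A"
    then obtain T a where Ta: "T \<in> Gs P L x (m+1)" "a \<in> T" "p = (T - {a}, a)"
      unfolding A_def h_def by auto
    have T: "T \<subseteq> P - {x}" "card T = m+1" "\<forall>l\<in>Lx. card (T \<inter> l) \<le> 1"
      using Ta(1) unfolding Gs_def Lx_def by auto
    have finT: "finite T" using T(1) finP finite_subset by blast
    have "\<forall>l\<in>Lx. card ((T - {a}) \<inter> l) \<le> 1"
    proof
      fix l assume "l \<in> Lx"
      have "card ((T - {a}) \<inter> l) \<le> card (T \<inter> l)" by (rule card_mono) (use finT in auto)
      thus "card ((T - {a}) \<inter> l) \<le> 1" using T(3) \<open>l \<in> Lx\<close> by fastforce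
    qed
    moreover have "card (T - {a}) = m" using T(2) Ta(2) finT by simp
    ultimately have "T - {a} \<in> Gs P L x m" using T(1) unfolding Gs_def Lx_def by blast
    moreover have "a \<in> C (T - {a})"
    proof -
      have "a \<in> P - {x}" using T Ta by blast
      then obtain l where l: "l \<in> Lx" "a \<in> l" using pp_cover[OF pp x] unfolding Lx_def by blast
      have "card (T \<inter> l) \<le> 1" using T(3) l by blast
      hence "T \<inter> l = {a}" using l Ta(2) finT card_le_Suc0_iff_eq[of "T \<inter> l"] by auto
      hence "l \<inter> (T - {a}) = {}" by blast
      thus ?thesis unfolding C_def using l \<open>a \<in> P - {x}\<close> by blast
    qed
    ultimately show "p \<in> Sigma (Gs P L x m) C" using Ta by auto
  qed
  have cC: "card (C U) \<le> q * (q + 1 - m)" if U: "U \<in> Gs P L x m" for U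
  proof -
    define Lx' where "Lx' = {l\<in>Lx. l \<inter> U \<noteq> {}}"
    have U': "U \<subseteq> P - {x}" "card U = m" "\<forall>l\<in>Lx. card (U \<inter> l) \<le> 1"
      using U unfolding Gs_def Lx_def by auto
    have Ucov: "U \<subseteq> (\<Union>l\<in>Lx'. U \<inter> l)"
    proof
      fix u assume u: "u \<in> U"
      then obtain l where "l \<in> Lx" "u \<in> l" using U'(1) pp_cover[OF pp x] unfolding Lx_def by blast
      thus "u \<in> (\<Union>l\<in>Lx'. U \<inter> l)" using u unfolding Lx'_def by blast
    qed
    have Lx'F: "finite Lx'" using LxF unfolding Lx'_def by simp
    have finU: "finite U" using U'(1) finP finite_subset by blast
    have "m \<le> card (\<Union>l\<in>Lx'. U \<inter> l)"
      using U'(2) card_mono[OF _ Ucov] Lx'F finU by simp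
    also have "\<dots> \<le> (\<Sum>l\<in>Lx'. card (U \<inter> l))" by (rule card_UN_le[OF Lx'F])
    also have "\<dots> \<le> (\<Sum>l\<in>Lx'. 1)" by (rule sum_mono) (use U'(3) in \<open>auto simp: Lx'_def\<close>)
    finally have m: "m \<le> card Lx'" by simp
    have eq: "{l\<in>Lx. l \<inter> U = {}} = Lx - Lx'" unfolding Lx'_def by blast
    have "card {l\<in>Lx. l \<inter> U = {}} = (q+1) - card Lx'"
      unfolding eq using card_Diff_subset[of Lx' Lx] Lx'F pp_card_through[OF pp x]
      unfolding Lx_def Lx'_def by auto
    also have "\<dots> \<le> q + 1 - m" using m by simp
    finally have c1: "card {l\<in>Lx. l \<inter> U = {}} \<le> q + 1 - m" .
    have "card (C U) \<le> (\<Sum>l\<in>{l\<in>Lx. l \<inter> U = {}}. card (l - {x}))"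
      unfolding C_def by (rule card_UN_le) (use LxF in simp)
    also have "\<dots> = (\<Sum>l\<in>{l\<in>Lx. l \<inter> U = {}}. q)"
      by (rule sum.cong) (auto simp: Lx_def lines_through_def pp_sub(2)[OF pp])
    also have "\<dots> \<le> (q + 1 - m) * q" using c1 by simp
    finally show ?thesis by (simp add: mult.commute)
  qed
  have finC: "finite (C U)" for U
  proof -
    have "C U \<subseteq> P" unfolding C_def Lx_def lines_through_def using pp_sub(1)[OF pp] by blast
    thus ?thesis using finP finite_subset by blast
  qed
  have "(m+1) * card (Gs P L x (m+1)) = card (h ` A)" using cA card_image[OF inj] by simp
  also have "\<dots> \<le> card (Sigma (Gs P L x m) C)"
  proof (rule card_mono[OF _ sub])
    show "finite (Sigma (Gs P L x m) C)"
      by (rule finite_SigmaI[OF Gs_fin[OF pp]]) (rule finC)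
  qed
  also have "\<dots> = (\<Sum>U\<in>Gs P L x m. card (C U))"
    by (rule card_SigmaI[OF Gs_fin[OF pp]]) (use finC in blast)
  also have "\<dots> \<le> (\<Sum>U\<in>Gs P L x m. q * (q + 1 - m))" by (rule sum_mono) (rule cC)
  finally show ?thesis by simp
qed

lemma Gs_bound:
  assumes pp: "projective_plane_of_order P L q" and x: "x \<in> P"
  shows "card (Gs P L x m) * fact m \<le> (\<Prod>i<m. q * (q + 1 - i))"
proof (induction m)
  case 0 thus ?case using Gs0[OF pp] by simp
next
  case (Suc m)
  have "card (Gs P L x (Suc m)) * fact (Suc m) = ((m+1) * card (Gs P L x (m+1))) * fact m"
    by (simp add: algebra_simps)
  also have "\<dots> \<le> (card (Gs P L x m) * (q * (q + 1 - m))) * fact m"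
    using Gs_step[OF pp x, of m] by (intro mult_right_mono) auto
  also have "\<dots> = (card (Gs P L x m) * fact m) * (q * (q + 1 - m))" by (simp add: algebra_simps)
  also have "\<dots> \<le> (\<Prod>i<m. q * (q + 1 - i)) * (q * (q + 1 - m))"
    using Suc.IH by (intro mult_right_mono) auto
  also have "\<dots> = (\<Prod>i<Suc m. q * (q + 1 - i))" by simp
  finally show ?case .
qed

lemma cover_nonsat:
  assumes pp: "projective_plane_of_order P L q"
  shows "{S. S \<subseteq> P \<and> card S = k} \<subseteq> {S. S \<subseteq> P \<and> card S = k \<and> saturating P L S} \<union> (\<Union>x\<in>P. Gs P L x k)"
proof
  fix S assume S: "S \<in> {S. S \<subseteq> P \<and> card S = k}"
  show "S \<in> {S. S \<subseteq> P \<and> card S = k \<and> saturating P L S} \<union> (\<Union>x\<in>P. Gs P L x k)"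
  proof (cases "saturating P L S")
    case True thus ?thesis using S by blast
  next
    case False
    then obtain x where x: "x \<in> P - S" "\<forall>a\<in>S. \<forall>b\<in>S. a \<noteq> b \<longrightarrow> \<not> collinear3 L x a b"
      unfolding saturating_def by blast
    have finS: "finite S" using S pp_fin[OF pp] finite_subset by blast
    have "\<forall>l\<in>lines_through L x. card (S \<inter> l) \<le> 1"
    proof
      fix l assume l: "l \<in> lines_through L x"
      show "card (S \<inter> l) \<le> 1"
      proof (rule ccontr)
        assume "\<not> ?thesis"
        then obtain a b where "a \<in> S \<inter> l" "b \<in> S \<inter> l" "a \<noteq> b"
          using card_le_Suc0_iff_eq[of "S \<inter> l"] finS by auto
        thus False using x l unfolding collinear3_def lines_through_def by blast
      qed
    qed
    hence "S \<in> Gs P L x k" using S x unfolding Gs_def by auto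
    thus ?thesis using x by blast
  qed
qed



lemma sum_lessThan_real: "(\<Sum>i<k. real i) = real k * (real k - 1) / 2"
  by (induction k) (auto simp: field_simps)

lemma ana:
  fixes q k :: nat and c :: real
  assumes q2: "q \<ge> 2" and c1: "c \<ge> 1"
    and lo: "2 * c * sqrt ((real q + 1) * ln (real q + 1)) + 2 \<le> real k"
    and hi: "real k < (real q ^ 2 - 1) / (real q + 2)"
  defines "N \<equiv> real q ^ 2 + real q + 1"
  shows "N * (\<Prod>i<k. real q * (real q + 1 - real i) / (N - real i))
         < 1 / ((real q + 1) powr (2 * c ^ 2 - 2))"
proof -
  define Q where "Q = real q"
  define K where "K = real k"
  have Q2: "Q \<ge> 2" using q2 unfolding Q_def by simp
  define l where "l = ln (Q + 1)"
  have lpos: "l > 0" unfolding l_def using Q2 by simp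
  define X where "X = (Q + 1) * l"
  have X0: "X \<ge> 0" unfolding X_def using Q2 lpos by simp
  have s0: "sqrt X \<ge> 0" using X0 by simp
  have K2: "K - 2 \<ge> 2 * c * sqrt X" using lo unfolding K_def X_def l_def Q_def by simp
  have cs0: "2 * c * sqrt X \<ge> 0" using c1 s0 by simp
  hence Kge2: "K \<ge> 2" using K2 by simp
  have A: "(K - 2)^2 \<ge> 4 * c^2 * X"
  proof -
    have "(2 * c * sqrt X)^2 \<le> (K - 2)^2" using power_mono[OF K2 cs0, of 2] .
    moreover have "(2 * c * sqrt X)^2 = 4 * c^2 * X" using X0 by (simp add: power_mult_distrib)
    ultimately show ?thesis by simp
  qed
  have h2: "(Q + 2) * K < Q^2 - 1" using hi Q2 unfolding K_def Q_def by (simp add: pos_less_divide_eq mult.commute)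
  have KltQ: "K < Q"
  proof -
    have "(Q + 2) * Q = Q^2 + 2 * Q" by (simp add: power2_eq_square algebra_simps)
    hence "(Q + 2) * K < (Q + 2) * Q" using h2 Q2 by linarith
    thus ?thesis using Q2 by simp
  qed
  have h3: "(K - 2)^2 \<le> K * (3 * K - 4)"
  proof -
    have e: "K * (3 * K - 4) - (K - 2)^2 = 2 * K^2 - 4" by (simp add: power2_eq_square algebra_simps)
    have "K^2 \<ge> 2^2" using power_mono[OF Kge2, of 2] by simp
    thus ?thesis using e by simp
  qed
  have D0: "(K - 2)^2 \<ge> 0" by simp
  have h4: "(Q + 2) * (K - 2)^2 \<le> (Q^2 - 1) * (3 * K - 4)"
  proof -
    have "((Q + 2) * (K - 2)^2) * K = ((Q + 2) * K) * (K - 2)^2" by (simp add: algebra_simps)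
    also have "\<dots> \<le> (Q^2 - 1) * (K - 2)^2" using mult_right_mono[OF less_imp_le[OF h2] D0] .
    also have "\<dots> \<le> (Q^2 - 1) * (K * (3 * K - 4))"
    proof (rule mult_left_mono[OF h3])
      have "Q^2 \<ge> 2^2" using power_mono[OF Q2, of 2] by simp
      thus "Q^2 - 1 \<ge> 0" by simp
    qed
    also have "\<dots> = ((Q^2 - 1) * (3 * K - 4)) * K" by (simp add: algebra_simps)
    finally show ?thesis using Kge2 by simp
  qed
  have NQ: "N = Q^2 + Q + 1" unfolding N_def Q_def by simp
  have Npos: "N > 0" using NQ Q2 by (simp add: add_pos_pos)
  have Q1: "Q^2 - 1 \<ge> 0"
  proof -
    have "Q^2 \<ge> 2^2" using power_mono[OF Q2, of 2] by simp
    thus ?thesis by simp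
  qed
  have h5: "(Q^2 - 1) * (K * (K - 1)) \<ge> N * (4 * c^2 * X)"
  proof -
    have "(Q^2 - 1) * (K * (K - 1)) = (Q^2 - 1) * (K - 2)^2 + (Q^2 - 1) * (3 * K - 4)"
      by (simp add: power2_eq_square algebra_simps)
    also have "\<dots> \<ge> (Q^2 - 1) * (4 * c^2 * X) + (Q + 2) * (4 * c^2 * X)"
    proof -
      have "(Q^2 - 1) * (K - 2)^2 \<ge> (Q^2 - 1) * (4 * c^2 * X)" using mult_left_mono[OF A Q1] .
      moreover have "(Q + 2) * (K - 2)^2 \<ge> (Q + 2) * (4 * c^2 * X)" using mult_left_mono[OF A] Q2 by simp
      ultimately show ?thesis using h4 by linarith
    qed
    finally show ?thesis unfolding NQ by (simp add: algebra_simps power2_eq_square)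
  qed
  define E where "E = (Q - 1) * (K * (K - 1) / 2) / N"
  have Ebig: "E \<ge> 2 * c^2 * l"
  proof -
    have "(Q^2 - 1) * (K * (K - 1)) = (Q + 1) * ((Q - 1) * (K * (K - 1)))" by (simp add: power2_eq_square algebra_simps)
    hence "(Q + 1) * ((Q - 1) * (K * (K - 1))) \<ge> (Q + 1) * (N * (4 * c^2 * l))"
      using h5 unfolding X_def by (simp add: algebra_simps)
    hence "(Q - 1) * (K * (K - 1)) \<ge> N * (4 * c^2 * l)" using Q2 by simp
    hence "(Q - 1) * (K * (K - 1)) / N \<ge> 4 * c^2 * l" using Npos by (simp add: pos_le_divide_eq mult.commute)
    thus ?thesis unfolding E_def by (simp add: field_simps)
  qed
  have fac: "real q * (real q + 1 - real i) / (N - real i) \<le> exp (- ((Q - 1) * real i / N))"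
        "0 \<le> real q * (real q + 1 - real i) / (N - real i)" if "i < k" for i
  proof -
    define I where "I = real i"
    have IK: "I < K" using that unfolding I_def K_def by simp
    have I0: "I \<ge> 0" unfolding I_def by simp
    have NI: "N - I > 0" using NQ IK KltQ Q2 by (simp add: power2_eq_square) (smt (verit) mult_le_cancel_right2)
    have num0: "Q * (Q + 1 - I) \<ge> 0" using IK KltQ Q2 by simp
    have "Q * (Q + 1 - I) * N \<le> (N - (Q - 1) * I) * (N - I)"
    proof -
      have "(N - (Q - 1) * I) * (N - I) - Q * (Q + 1 - I) * N = N + (Q - 1) * I^2"
        unfolding NQ by (simp add: power2_eq_square algebra_simps)
      moreover have "(Q - 1) * I^2 \<ge> 0" using Q2 by simp
      ultimately show ?thesis using Npos by linarith
    qed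
    hence "Q * (Q + 1 - I) / (N - I) \<le> (N - (Q - 1) * I) / N"
      using NI Npos by (simp add: divide_simps)
    also have "\<dots> = 1 + (- ((Q - 1) * I / N))" using Npos by (simp add: field_simps)
    also have "\<dots> \<le> exp (- ((Q - 1) * I / N))" by (rule exp_ge_add_one_self)
    finally show "real q * (real q + 1 - real i) / (N - real i) \<le> exp (- ((Q - 1) * real i / N))"
      unfolding I_def Q_def .
    show "0 \<le> real q * (real q + 1 - real i) / (N - real i)"
      using num0 NI unfolding I_def Q_def by simp
  qed
  have "(\<Prod>i<k. real q * (real q + 1 - real i) / (N - real i)) \<le> (\<Prod>i<k. exp (- ((Q - 1) * real i / N)))"
    by (rule prod_mono) (use fac in auto)
  also have "\<dots> = exp (\<Sum>i<k. - ((Q - 1) * real i / N))" by (simp add: exp_sum)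
  also have "(\<Sum>i<k. - ((Q - 1) * real i / N)) = - ((Q - 1) * (\<Sum>i<k. real i) / N)"
    by (simp add: sum_negf sum_divide_distrib sum_distrib_left)
  also have "\<dots> = - E" unfolding E_def sum_lessThan_real K_def by simp
  finally have P1: "(\<Prod>i<k. real q * (real q + 1 - real i) / (N - real i)) \<le> exp (- E)" .
  have "exp (- E) \<le> exp (- (2 * c^2 * l))" using Ebig by simp
  hence "N * (\<Prod>i<k. real q * (real q + 1 - real i) / (N - real i)) \<le> N * exp (- (2 * c^2 * l))"
    using P1 Npos by (meson mult_left_mono less_imp_le order_trans)
  also have "\<dots> < (Q + 1)^2 * exp (- (2 * c^2 * l))"
  proof (rule mult_strict_right_mono)
    show "N < (Q + 1)^2" unfolding NQ using Q2 by (simp add: power2_eq_square algebra_simps)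
  qed simp
  also have "\<dots> = 1 / ((real q + 1) powr (2 * c ^ 2 - 2))"
  proof -
    have e1: "exp l = Q + 1" unfolding l_def using Q2 by simp
    have "exp (2 * l) = exp l ^ 2" using exp_of_nat_mult[of 2 l] by simp
    hence "(Q + 1)^2 = exp (2 * l)" using e1 by simp
    moreover have "(real q + 1) powr (2 * c ^ 2 - 2) = exp ((2 * c^2 - 2) * l)"
      unfolding l_def Q_def powr_def by simp
    moreover have "exp (2 * l) * exp (- (2 * c^2 * l)) = exp (- ((2 * c^2 - 2) * l))"
      by (simp add: exp_add[symmetric] algebra_simps)
    moreover have "exp (- ((2 * c^2 - 2) * l)) = 1 / exp ((2 * c^2 - 2) * l)"
      by (simp add: exp_minus divide_inverse)
    ultimately show ?thesis by simp
  qed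
  finally show ?thesis .
qed


lemma pp_ne:
  assumes pp: "projective_plane_of_order P L q"
  shows "\<exists>x. x \<in> P"
  using pp unfolding projective_plane_of_order_def
  apply (elim conjE exE)
  apply (rule exI)
  apply (erule subsetD)
  apply (rule insertI1)
  done

theorem theorem2:
  fixes P :: "'a set" and L :: "'a set set" and q k :: nat and c :: real
  assumes "projective_plane_of_order P L q"
    and "q \<ge> 2"
    and "c \<ge> 1"
    and "2 * c * sqrt ((real q + 1) * ln (real q + 1)) + 2 \<le> real k"
    and "real k < (real q ^ 2 - 1) / (real q + 2)"
  shows "real (card {S. S \<subseteq> P \<and> card S = k \<and> saturating P L S})
           / real (card {S. S \<subseteq> P \<and> card S = k})
         > 1 - 1 / ((real q + 1) powr (2 * c ^ 2 - 2))"
proof -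
  note pp = assms(1)
  obtain x0 where x0: "x0 \<in> P" using pp_ne[OF pp] by blast
  have finP: "finite P" using pp_fin[OF pp] .
  define N where "N = card P"
  have NQ: "real N = real q ^ 2 + real q + 1" unfolding N_def pp_cardP[OF pp x0] by simp
  have kq: "k < q"
  proof -
    have "(real q + 2) * real k < real q ^ 2 - 1" using assms(5) assms(2)
      by (simp add: pos_less_divide_eq mult.commute)
    moreover have "(real q + 2) * real q = real q ^ 2 + 2 * real q" by (simp add: power2_eq_square algebra_simps)
    ultimately have "(real q + 2) * real k < (real q + 2) * real q" by linarith
    hence "real k < real q" using assms(2) by simp
    thus ?thesis by simp
  qed
  define Tset where "Tset = {S. S \<subseteq> P \<and> card S = k}"
  define Sset where "Sset = {S. S \<subseteq> P \<and> card S = k \<and> saturating P L S}"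
  define Pr where "Pr = (\<Prod>i<k. real q * (real q + 1 - real i))"
  have finT: "finite Tset" unfolding Tset_def using finP by simp
  have cT: "card Tset = N choose k" unfolding Tset_def N_def by (rule n_subsets[OF finP])
  have kN: "k \<le> N" using kq unfolding N_def pp_cardP[OF pp x0] by simp
  have D: "fact k * real (card Tset) = (\<Prod>i<k. real N - real i)"
    unfolding cT binomial_gbinomial using gbinomial_mult_fact[of k "real N"]
    by (simp add: atLeast0LessThan)
  have Dpos: "(\<Prod>i<k. real N - real i) > 0"
    by (rule prod_pos) (use kN in auto)
  have Tpos: "real (card Tset) > 0" using cT kN by simp
  have Gb: "real (card (Gs P L x k)) \<le> Pr / fact k" if "x \<in> P" for x
  proof -
    have "card (Gs P L x k) * fact k \<le> (\<Prod>i<k. q * (q + 1 - i))" by (rule Gs_bound[OF pp that])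
    hence "real (card (Gs P L x k) * fact k) \<le> real (\<Prod>i<k. q * (q + 1 - i))" by (simp only: of_nat_le_iff)
    also have "\<dots> = Pr" unfolding Pr_def of_nat_prod
      by (rule prod.cong) (use kq in \<open>auto simp: of_nat_diff\<close>)
    finally show ?thesis by (simp add: pos_le_divide_eq)
  qed
  have "card Tset \<le> card (Sset \<union> (\<Union>x\<in>P. Gs P L x k))"
  proof (rule card_mono)
    have "finite Sset" unfolding Sset_def using finP by simp
    moreover have "finite (\<Union>x\<in>P. Gs P L x k)" using finP Gs_fin[OF pp] by blast
    ultimately show "finite (Sset \<union> (\<Union>x\<in>P. Gs P L x k))" by blast
    show "Tset \<subseteq> Sset \<union> (\<Union>x\<in>P. Gs P L x k)" using cover_nonsat[OF pp, of k] unfolding Tset_def Sset_def .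
  qed
  also have "\<dots> \<le> card Sset + card (\<Union>x\<in>P. Gs P L x k)" by (rule card_Un_le)
  also have "\<dots> \<le> card Sset + (\<Sum>x\<in>P. card (Gs P L x k))" using card_UN_le[OF finP] by simp
  finally have "real (card Tset) \<le> real (card Sset + (\<Sum>x\<in>P. card (Gs P L x k)))"
    by (simp only: of_nat_le_iff)
  also have "\<dots> = real (card Sset) + (\<Sum>x\<in>P. real (card (Gs P L x k)))"
    by (simp only: of_nat_add of_nat_sum)
  also have "(\<Sum>x\<in>P. real (card (Gs P L x k))) \<le> (\<Sum>x\<in>P. Pr / fact k)" by (rule sum_mono) (rule Gb)
  also have "\<dots> = real N * Pr / fact k" unfolding N_def by simp
  finally have fail: "real (card Tset) - real (card Sset) \<le> real N * Pr / fact k" by simp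
  have "(real (card Tset) - real (card Sset)) / real (card Tset) \<le> real N * Pr / (fact k * real (card Tset))"
  proof -
    have "(real (card Tset) - real (card Sset)) / real (card Tset) \<le> (real N * Pr / fact k) / real (card Tset)"
      using divide_right_mono[OF fail, of "real (card Tset)"] Tpos by linarith
    also have "\<dots> = real N * Pr / (fact k * real (card Tset))" by (simp add: divide_divide_eq_left)
    finally show ?thesis .
  qed
  also have "\<dots> = real N * (\<Prod>i<k. real q * (real q + 1 - real i) / (real N - real i))"
    unfolding D Pr_def prod_dividef by simp
  also have "\<dots> < 1 / ((real q + 1) powr (2 * c ^ 2 - 2))"
    using ana[OF assms(2-5)] unfolding NQ .
  finally have "1 - real (card Sset) / real (card Tset) < 1 / ((real q + 1) powr (2 * c ^ 2 - 2))"
    using Tpos by (simp add: diff_divide_distrib)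
  thus ?thesis unfolding Tset_def Sset_def by simp
qed

end
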